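(* Consider the setting below. Let $\alpha_1,\beta_1>0$, let $p,q$ be odd positive integers with $0<q<2p$, let $r>0$, and let $\epsilon>0$ be the constant of the persistent-excitation property (i.e. $\hat\gamma_1(t)\ge\epsilon$ for all $t\ge T_1+r$ whenever $w\ne0$, with $\epsilon$ depending only on $r,B_{\min},w_{\min}$). Let $\hat\zeta$ evolve according to $$\dot{\hat\zeta}(t)=\begin{cases}-\hat\gamma_1(t)^{-1}\Big(\alpha_1 e_\gamma^{1+\frac{q}{p}}+\beta_1 e_\gamma^{1-\frac{q}{p}}+\hat\zeta(t)\big(|z_2(t)|-|z_2(t-r)|\big)-\big(|z_4(t)|-|z_4(t-r)|\big)\Big), & \text{if } \hat\gamma_1(t)>\epsilon,\\[2pt] -\alpha_1\hat\zeta(t)^{1+\frac{q}{p}}-\beta_1\hat\zeta(t)^{1-\frac{q}{p}}, & \text{otherwise},\end{cases}$$ where $e_\gamma(t)=\hat\zeta(t)\hat\gamma_1(t)-\hat\gamma_2(t)$, and set $\hat w(t)=|\hat\zeta(t)|^{1/2}$. Then there exists a time $T_{\max}$, independent of the initial conditions, such that $\hat w(t)=w$ for all $t\ge T_{\max}$.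
   Context: The signal is $y(t)=A+B\sin(wt+\phi_0)$, where $A>0$, $B>B_{\min}$, $\phi_0\in\mathbb{R}$ are unknown constants and the angular frequency satisfies $w=0$ or $w\ge w_{\min}$; $B_{\min}>0$, $w_{\min}>0$ are known constants. Assumption 1: there are a known $L>0$ and a known integer $m\ge4$ with $|y^{(m)}(t)|\le L$ for all $t$. The signals $z_2,z_4$ are the second and fourth states of the fixed-time arbitrary-order differentiator of Angulo, Moreno and Fridman (2013) (order $m$) driven by $y$; its properties used are: all its states are bounded, and there is a time $T_1$ independent of initial conditions such that $z_2(t)=y^{(1)}(t)$ and $z_4(t)=y^{(3)}(t)$ for all $t\ge T_1$. Also $z_2(t)=z_4(t)=0$ for $t\in[-r,0)$, and $\hat\gamma_1(t)=\int_{t-r}^{t}|z_2(\tau)|\,d\tau$, $\hat\gamma_2(t)=\int_{t-r}^{t}|z_4(\tau)|\,d\tau$. For odd $p$, a power $x^{k/p}$ with integer $k$ denotes the real $p$-th root of $x$ raised to the power $k$. The quantity $\hat\zeta$ estimates $\zeta=w^2$. *)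

theory Defs
  imports "HOL-Analysis.Analysis"
begin

definition sinusoid :: "real \<Rightarrow> real \<Rightarrow> real \<Rightarrow> real \<Rightarrow> real \<Rightarrow> real" where
  "sinusoid A B w phi0 = (\<lambda>t. A + B * sin (w * t + phi0))"

text \<open>For odd p, x^(k/p) = (real p-th root of x)^k, k an integer (possibly negative).\<close>
definition opow :: "nat \<Rightarrow> int \<Rightarrow> real \<Rightarrow> real" where
  "opow p k x = (root p x) powi k"

definition win_int :: "real \<Rightarrow> (real \<Rightarrow> real) \<Rightarrow> real \<Rightarrow> real" where
  "win_int r z t = integral {t - r..t} (\<lambda>\<tau>. \<bar>z \<tau>\<bar>)"

definition zeta_rhs ::
  "real \<Rightarrow> real \<Rightarrow> nat \<Rightarrow> nat \<Rightarrow> real \<Rightarrow> real \<Rightarrow> (real \<Rightarrow> real) \<Rightarrow> (real \<Rightarrow> real)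
   \<Rightarrow> real \<Rightarrow> real \<Rightarrow> real" where
  "zeta_rhs \<alpha>1 \<beta>1 p q r \<epsilon> z2 z4 t \<zeta> =
    (let g1 = win_int r z2 t; g2 = win_int r z4 t; e = \<zeta> * g1 - g2 in
     if g1 > \<epsilon> then
       - inverse g1 * (\<alpha>1 * opow p (int p + int q) e + \<beta>1 * opow p (int p - int q) e
                       + \<zeta> * (\<bar>z2 t\<bar> - \<bar>z2 (t - r)\<bar>) - (\<bar>z4 t\<bar> - \<bar>z4 (t - r)\<bar>))
     else - \<alpha>1 * opow p (int p + int q) \<zeta> - \<beta>1 * opow p (int p - int q) \<zeta>)"

text \<open>Properties of the fixed-time differentiator states z2, z4 used in the paper:
  bounded, (continuous for t >= 0, as states of the differentiator), zero on [-r,0),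
  and exact for t >= T1.\<close>
definition diff_states :: "(real \<Rightarrow> real) \<Rightarrow> real \<Rightarrow> real \<Rightarrow> (real \<Rightarrow> real) \<Rightarrow> (real \<Rightarrow> real) \<Rightarrow> bool" where
  "diff_states y r T1 z2 z4 \<longleftrightarrow>
     (\<exists>M. \<forall>t\<ge>-r. \<bar>z2 t\<bar> \<le> M \<and> \<bar>z4 t\<bar> \<le> M) \<and>
     continuous_on {0..} z2 \<and> continuous_on {0..} z4 \<and>
     (\<forall>t\<in>{-r..<0}. z2 t = 0 \<and> z4 t = 0) \<and>
     (\<forall>t\<ge>T1. z2 t = deriv y t \<and> z4 t = (deriv ^^ 3) y t)"

definition car_solution :: "(real \<Rightarrow> real \<Rightarrow> real) \<Rightarrow> (real \<Rightarrow> real) \<Rightarrow> bool" where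
  "car_solution f \<zeta> \<longleftrightarrow>
     (\<forall>t\<ge>0. (\<lambda>s. f s (\<zeta> s)) absolutely_integrable_on {0..t} \<and>
             ((\<lambda>s. f s (\<zeta> s)) has_integral (\<zeta> t - \<zeta> 0)) {0..t})"

end

theory Submission
  imports Defs
begin

lemma slope_const:
  fixes V :: "real \<Rightarrow> real"
  assumes "a < b" "continuous_on {a..b} V"
    "\<And>x. a < x \<Longrightarrow> x < b \<Longrightarrow> (V has_real_derivative c) (at x)"
  shows "V b - V a = (b - a) * c"
proof -
  obtain l z where z: "a < z" "z < b" "DERIV V z :> l" "V b - V a = (b - a) * l"
    using MVT[OF assms(1,2)] assms(3) real_differentiable_def by metis
  have "l = c" using DERIV_unique[OF z(3) assms(3)[OF z(1,2)]] .
  thus ?thesis using z by simp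
qed

lemma core_zero:
  fixes e V :: "real \<Rightarrow> real" and T0 Tf t :: real
  assumes ce: "continuous_on {T0..} e" and cV: "continuous_on {T0..} V"
  and dneg: "\<And>t. t > T0 \<Longrightarrow> e t < 0 \<Longrightarrow> (V has_real_derivative 1) (at t)"
  and dpos: "\<And>t. t > T0 \<Longrightarrow> e t > 0 \<Longrightarrow> (V has_real_derivative -1) (at t)"
  and Vb: "\<And>t. t \<ge> T0 \<Longrightarrow> 0 \<le> V t \<and> V t < Tf"
  and V0: "\<And>t. t \<ge> T0 \<Longrightarrow> e t = 0 \<Longrightarrow> V t = 0"
  and t: "t \<ge> T0 + Tf"
  shows "e t = 0"
proof -
  have Tf: "Tf > 0" using Vb[of T0] by auto
  have ceS: "continuous_on {a..b} e" if "a \<ge> T0" for a b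
    using continuous_on_subset[OF ce] that by auto
  have cVS: "continuous_on {a..b} V" if "a \<ge> T0" for a b
    using continuous_on_subset[OF cV] that by auto
  have tT0: "t \<ge> T0" using t Tf by simp
  show ?thesis
  proof (rule ccontr)
    assume ne: "e t \<noteq> 0"
    show False
    proof (cases "e t < 0")
      case True
      define t2 where "t2 = t + Tf"
      define Z where "Z = {x \<in> {t..t2}. e x = 0}"
      show False
      proof (cases "Z = {}")
        case True
        have neg: "e x < 0" if xx: "t \<le> x" "x \<le> t2" for x
        proof (rule ccontr)
          assume "\<not> e x < 0"
          then obtain y where "y \<ge> t" "y \<le> x" "e y = 0"
            using IVT'[of e t 0 x] ceS[of t x] \<open>e t < 0\<close> tT0 xx by force
          then have "y \<in> Z" using xx unfolding Z_def by auto
          thus False using True by auto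
        qed
        have "V t2 - V t = (t2 - t) * 1"
          by (rule slope_const) (use Tf tT0 neg dneg cVS t2_def in auto)
        thus False using Vb[of t] Vb[of t2] Tf tT0 t2_def by auto
      next
        case False
        have "compact Z" unfolding Z_def compact_eq_bounded_closed
          using continuous_closed_preimage_constant[OF ceS[of t t2]] tT0
          by (auto intro: bounded_subset[OF bounded_closed_interval])
        then obtain tz where tz: "tz \<in> Z" "\<And>y. y \<in> Z \<Longrightarrow> tz \<le> y"
          using compact_attains_inf[OF _ False] by metis
        have tzt: "tz > t" using tz(1) \<open>e t < 0\<close> unfolding Z_def
          by (metis (mono_tags, lifting) mem_Collect_eq atLeastAtMost_iff less_eq_real_def less_irrefl)
        have neg: "e x < 0" if xx: "t \<le> x" "x < tz" for x
        proof (rule ccontr)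
          assume "\<not> e x < 0"
          then obtain y where "y \<ge> t" "y \<le> x" "e y = 0"
            using IVT'[of e t 0 x] ceS[of t x] \<open>e t < 0\<close> tT0 xx by force
          then have "y \<in> Z" using xx tz(1) unfolding Z_def by auto
          thus False using tz(2) xx \<open>y \<le> x\<close> by fastforce
        qed
        have "V tz - V t = (tz - t) * 1"
          by (rule slope_const) (use tzt tT0 neg dneg cVS in auto)
        moreover have "V tz = 0" using V0[of tz] tz(1) tT0 unfolding Z_def by auto
        ultimately show False using Vb[of t] tzt tT0 by auto
      qed
    next
      case False
      hence pos: "e t > 0" using ne by auto
      define t1 where "t1 = t - Tf"
      have t1: "t1 \<ge> T0" using t t1_def by simp
      define Z where "Z = {x \<in> {t1..t}. e x = 0}"
      show False
      proof (cases "Z = {}")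
        case True
        have ps: "e x > 0" if xx: "t1 \<le> x" "x \<le> t" for x
        proof (rule ccontr)
          assume "\<not> e x > 0"
          then obtain y where "y \<ge> x" "y \<le> t" "e y = 0"
            using IVT'[of e x 0 t] ceS[of x t] pos t1 xx by force
          then have "y \<in> Z" using xx unfolding Z_def by auto
          thus False using True by auto
        qed
        have "V t - V t1 = (t - t1) * -1"
          by (rule slope_const) (use Tf t1 ps dpos cVS t1_def in auto)
        thus False using Vb[of t] Vb[of t1] Tf t1 t1_def by auto
      next
        case False
        have "compact Z" unfolding Z_def compact_eq_bounded_closed
          using continuous_closed_preimage_constant[OF ceS[of t1 t]] t1
          by (auto intro: bounded_subset[OF bounded_closed_interval])
        then obtain tz where tz: "tz \<in> Z" "\<And>y. y \<in> Z \<Longrightarrow> y \<le> tz"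
          using compact_attains_sup[OF _ False] by metis
        have tzt: "tz < t" using tz(1) pos unfolding Z_def
          by (metis (mono_tags, lifting) mem_Collect_eq atLeastAtMost_iff less_eq_real_def less_irrefl)
        have ps: "e x > 0" if xx: "tz < x" "x \<le> t" for x
        proof (rule ccontr)
          assume "\<not> e x > 0"
          then obtain y where "y \<ge> x" "y \<le> t" "e y = 0"
            using IVT'[of e x 0 t] ceS[of x t] pos t1 xx tz(1) unfolding Z_def by force
          then have "y \<in> Z" using xx tz(1) unfolding Z_def by auto
          thus False using tz(2) xx \<open>y \<ge> x\<close> by fastforce
        qed
        have tzT: "tz \<ge> T0" using tz(1) t1 unfolding Z_def by auto
        have "V t - V tz = (t - tz) * -1"
          by (rule slope_const) (use tzt tzT ps dpos cVS in auto)
        moreover have "V tz = 0" using V0[of tz] tz(1) tzT unfolding Z_def by auto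
        ultimately show False using Vb[of t] tzt tT0 by auto
      qed
    qed
  qed
qed

definition Wf :: "real \<Rightarrow> real \<Rightarrow> real \<Rightarrow> real \<Rightarrow> real" where
  "Wf a b s x = arctan (sqrt (a / b) * \<bar>x\<bar> powr s) / (s * sqrt (a * b))"

lemma Wf_bounds:
  assumes "a > 0" "b > 0" "s > 0"
  shows "0 \<le> Wf a b s x \<and> Wf a b s x < pi / 2 / (s * sqrt (a * b))"
proof -
  have K: "s * sqrt (a * b) > 0" using assms by simp
  have "sqrt (a / b) * \<bar>x\<bar> powr s \<ge> 0" using assms by simp
  hence "arctan (sqrt (a / b) * \<bar>x\<bar> powr s) \<ge> 0"
    by (metis arctan_less_zero_iff not_less)
  moreover have "arctan (sqrt (a / b) * \<bar>x\<bar> powr s) < pi/2" by (rule arctan_ubound)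
  moreover have "arctan (sqrt (a / b) * \<bar>x\<bar> powr s) / (s * sqrt (a * b)) < (pi/2) / (s * sqrt (a * b))"
    by (rule divide_strict_right_mono[OF arctan_ubound K])
  ultimately show ?thesis unfolding Wf_def using K by simp
qed

lemma Wf_zero: "Wf a b s 0 = 0"
  unfolding Wf_def by simp

lemma Wf_cont: assumes "s > 0" "a > 0" "b > 0" shows "continuous_on UNIV (Wf a b s)"
  unfolding Wf_def
  by (intro continuous_intros continuous_on_powr') (use assms in auto)

lemma Wf_deriv:
  fixes e :: "real \<Rightarrow> real"
  assumes ab: "a > 0" "b > 0" "s > 0" and ne: "e t \<noteq> 0"
    and d: "(e has_real_derivative -(a * \<bar>e t\<bar> powr (1+s) + b * \<bar>e t\<bar> powr (1-s))) (at t)"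
  shows "((\<lambda>x. Wf a b s (e x)) has_real_derivative - sgn (e t)) (at t)"
proof -
  define u where "u = \<bar>e t\<bar>"
  have u: "u > 0" using ne u_def by simp
  define D where "D = -(a * u powr (1+s) + b * u powr (1-s))"
  define c where "c = sqrt (a / b)"
  define K where "K = s * sqrt (a * b)"
  define v where "v = u powr s"
  have v: "v > 0" using u v_def by simp
  have ct: "(e \<longlongrightarrow> e t) (nhds t)"
    using DERIV_isCont[OF d] by (simp add: isCont_def tendsto_at_iff_tendsto_nhds)
  have ev: "eventually (\<lambda>x. \<bar>e x\<bar> = sgn (e t) * e x) (nhds t)"
  proof (cases "e t > 0")
    case True
    show ?thesis using order_tendstoD(1)[OF ct True] by eventually_elim (use True in auto)
  next
    case False
    hence "e t < 0" using ne by auto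
    show ?thesis using order_tendstoD(2)[OF ct \<open>e t < 0\<close>] by eventually_elim (use \<open>e t < 0\<close> in auto)
  qed
  have dabs: "((\<lambda>x. \<bar>e x\<bar>) has_real_derivative sgn (e t) * D) (at t)"
  proof -
    have "((\<lambda>x. sgn (e t) * e x) has_real_derivative sgn (e t) * D) (at t)"
      using DERIV_cmult[OF d, of "sgn (e t)"] unfolding D_def u_def .
    thus ?thesis using DERIV_cong_ev[OF refl ev refl] by simp
  qed
  have dpow: "((\<lambda>x. \<bar>e x\<bar> powr s) has_real_derivative s * u powr (s - 1) * (sgn (e t) * D)) (at t)"
    using DERIV_fun_powr[OF dabs, of s] u unfolding u_def by simp
  have darc: "((\<lambda>x. arctan (c * \<bar>e x\<bar> powr s)) has_real_derivative
       inverse (1 + (c * v)^2) * (c * (s * u powr (s - 1) * (sgn (e t) * D)))) (at t)"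
    using DERIV_chain2[OF DERIV_arctan DERIV_cmult[OF dpow, of c]] unfolding v_def u_def
    by (simp add: power2_eq_square)
  have key: "inverse (1 + (c * v)^2) * (c * (s * u powr (s - 1) * (sgn (e t) * D))) / K = - sgn (e t)"
  proof -
    have p1: "u powr (s - 1) * u powr (1 + s) = v^2"
      using u unfolding v_def by (simp add: powr_add[symmetric] power2_eq_square)
    have p2: "u powr (s - 1) * u powr (1 - s) = 1"
      using u by (simp add: powr_add[symmetric])
    have uD: "u powr (s - 1) * D = - (a * v^2 + b)"
      unfolding D_def using p1 p2 by (simp add: algebra_simps)
    have cc: "c^2 = a / b" unfolding c_def using ab by simp
    have den: "1 + (c * v)^2 = (b + a * v^2) / b" using cc ab by (simp add: field_simps power_mult_distrib)
    have cK: "c * b / K = 1 / s"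
      unfolding c_def K_def using ab
      by (simp add: real_sqrt_divide real_sqrt_mult field_simps)
    have pos: "b + a * v^2 > 0" using ab by (simp add: add_pos_nonneg)
    have "inverse (1 + (c * v)^2) * (c * (s * u powr (s - 1) * (sgn (e t) * D))) / K
        = sgn (e t) * c * s * (u powr (s - 1) * D) / ((1 + (c * v)^2) * K)"
      by (simp add: field_simps)
    also have "\<dots> = sgn (e t) * c * s * (- (b + a * v^2)) / (((b + a * v^2) / b) * K)"
      using uD den by (simp add: add.commute)
    also have "\<dots> = - sgn (e t) * s * (c * b / K)"
    proof -
      have "K > 0" unfolding K_def using ab by simp
      obtain N where N: "N = b + a * v^2" by simp
      have Np: "N > 0" using N pos by simp
      have "sgn (e t) * c * s * (- N) / ((N / b) * K) = - sgn (e t) * s * (c * b / K)"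
        using \<open>K > 0\<close> Np ab by (simp add: field_simps)
      thus ?thesis using N by simp
    qed
    also have "\<dots> = - sgn (e t)" using cK ab by simp
    finally show ?thesis .
  qed
  show ?thesis unfolding Wf_def c_def[symmetric] K_def[symmetric]
    using DERIV_cdivide[OF darc, of K] key by simp
qed

lemma ode_zero:
  fixes e :: "real \<Rightarrow> real"
  assumes ab: "a > 0" "b > 0" "s > 0" and ce: "continuous_on {T0..} e"
    and d: "\<And>t. t > T0 \<Longrightarrow> e t \<noteq> 0 \<Longrightarrow>
       (e has_real_derivative -(a * \<bar>e t\<bar> powr (1+s) + b * \<bar>e t\<bar> powr (1-s))) (at t)"
    and t: "t \<ge> T0 + pi / 2 / (s * sqrt (a * b))"
  shows "e t = 0"
proof -
  have cV: "continuous_on {T0..} (\<lambda>x. Wf a b s (e x))"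
    using continuous_on_compose2[OF Wf_cont[OF ab(3,1,2)] ce] by auto
  have dn: "((\<lambda>x. Wf a b s (e x)) has_real_derivative 1) (at t)" if "t > T0" "e t < 0" for t
    using Wf_deriv[OF ab _ d[OF that(1)]] that by simp
  have dp: "((\<lambda>x. Wf a b s (e x)) has_real_derivative -1) (at t)" if "t > T0" "e t > 0" for t
    using Wf_deriv[OF ab _ d[OF that(1)]] that by simp
  have Vb: "0 \<le> Wf a b s (e t) \<and> Wf a b s (e t) < pi / 2 / (s * sqrt (a * b))" if "t \<ge> T0" for t
    using Wf_bounds[OF ab] by blast
  have V0: "Wf a b s (e t) = 0" if "t \<ge> T0" "e t = 0" for t using that Wf_zero by simp
  show ?thesis by (rule core_zero[OF ce cV dn dp Vb V0 t])
qed


lemma int_deriv_at: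
  fixes h :: "real \<Rightarrow> real"
  assumes "continuous_on {c..d} h" "c < u" "u < d"
  shows "((\<lambda>x. integral {c..x} h) has_real_derivative h u) (at u)"
proof -
  have i: "u \<in> interior {c..d}" using assms(2,3) by (simp add: interior_atLeastAtMost_real)
  have u: "u \<in> {c..d}" using assms(2,3) by simp
  have "at u within {c..d} = at u" by (rule at_within_interior[OF i])
  with integral_has_real_derivative[OF assms(1) u] show ?thesis by simp
qed

lemma window_deriv:
  fixes h :: "real \<Rightarrow> real"
  assumes ch: "continuous_on UNIV h" and r: "r > 0"
  shows "((\<lambda>x. integral {x - r..x} h) has_real_derivative h x0 - h (x0 - r)) (at x0)"
proof -
  define c where "c = x0 - r - 1"
  define d where "d = x0 + 1"
  have chs: "continuous_on {c..d} h" by (rule continuous_on_subset[OF ch]) simp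
  have cd: "c < x0" "x0 < d" "c < x0 - r" "x0 - r < d" using r unfolding c_def d_def by auto
  have I1: "((\<lambda>x. integral {c..x} h) has_real_derivative h x0) (at x0)"
    by (rule int_deriv_at[OF chs cd(1,2)])
  have I2: "((\<lambda>x. integral {c..x} h) has_real_derivative h (x0 - r)) (at (x0 - r))"
    by (rule int_deriv_at[OF chs cd(3,4)])
  have I3: "((\<lambda>x. integral {c..x - r} h) has_real_derivative h (x0 - r) * 1) (at x0)"
  proof -
    have "((\<lambda>x. x - r) has_real_derivative 1) (at x0)"
      using DERIV_diff[OF DERIV_ident DERIV_const[of r]] by simp
    from DERIV_chain2[OF I2 this] show ?thesis by (simp add: o_def)
  qed
  have D: "((\<lambda>x. integral {c..x} h - integral {c..x - r} h) has_real_derivative h x0 - h (x0 - r)) (at x0)"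
    using DERIV_diff[OF I1 I3] by simp
  have ev: "eventually (\<lambda>x. integral {x - r..x} h = integral {c..x} h - integral {c..x - r} h) (nhds x0)"
  proof -
    have "eventually (\<lambda>x. x \<in> {x0 - 1<..<x0 + 1}) (nhds x0)"
      by (rule eventually_nhds_in_open) auto
    thus ?thesis
    proof eventually_elim
      case (elim x)
      have "integral {c..x - r} h + integral {x - r..x} h = integral {c..x} h"
      proof -
        have 1: "c \<le> x - r" "x - r \<le> x" unfolding c_def using elim r by auto
        have 2: "h integrable_on {c..x}"
          by (rule integrable_continuous_real, rule continuous_on_subset[OF ch]) simp
        show ?thesis using Henstock_Kurzweil_Integration.integral_combine[OF 1 2] .
      qed
      thus ?case by simp
    qed
  qed
  show ?thesis using DERIV_cong_ev[OF refl ev refl] D by simp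
qed



lemma powi_even_nonneg:
  fixes y :: real
  assumes "even k" shows "y powi k \<ge> 0"
proof -
  obtain j where k: "k = j * 2" using assms by (auto elim!: evenE simp: mult.commute)
  have "y powi k = (y powi j) powi 2" unfolding k by (rule power_int_mult)
  also have "\<dots> = (y powi j)^2" by simp
  finally show ?thesis by simp
qed

lemma opow_eq:
  assumes "odd p" "even k" "x \<noteq> 0"
  shows "opow p k x = \<bar>x\<bar> powr (real_of_int k / real p)"
proof -
  have p: "p > 0" using assms(1) by (cases p) auto
  have "root p x powi k = \<bar>root p x powi k\<bar>" using powi_even_nonneg[OF assms(2)] by simp
  also have "\<dots> = \<bar>root p x\<bar> powi k" by (rule power_int_abs)
  also have "\<bar>root p x\<bar> = \<bar>x\<bar> powr (1 / real p)"
    using p by (simp add: real_root_abs[symmetric] root_powr_inverse)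
  also have "(\<bar>x\<bar> powr (1 / real p)) powi k = (\<bar>x\<bar> powr (1 / real p)) powr real_of_int k"
    using assms(3) by (simp add: powr_real_of_int')
  also have "\<dots> = \<bar>x\<bar> powr (real_of_int k / real p)"
    by (simp add: powr_powr)
  finally show ?thesis unfolding opow_def .
qed

lemma opow_cont:
  assumes "odd p" "x \<noteq> 0"
  shows "isCont (opow p k) x"
proof -
  have p: "p > 0" using assms(1) by (cases p) auto
  have nz: "root p x \<noteq> 0" using assms p by simp
  have "isCont (\<lambda>y. root p y powi k) x"
    by (rule continuous_at_within_power_int[OF isCont_real_root]) (use nz in blast)
  thus ?thesis unfolding opow_def .
qed

lemma deriv_sin: "deriv (sinusoid A B w \<phi>) = (\<lambda>t. B * w * cos (w * t + \<phi>))"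
proof
  fix t
  have "((\<lambda>t. A + B * sin (w * t + \<phi>)) has_real_derivative B * w * cos (w * t + \<phi>)) (at t)"
    by (rule derivative_eq_intros refl | simp)+
  thus "deriv (sinusoid A B w \<phi>) t = B * w * cos (w * t + \<phi>)"
    unfolding sinusoid_def by (rule DERIV_imp_deriv)
qed

lemma deriv_cos: fixes c w \<phi> :: real shows "deriv (\<lambda>t. c * cos (w * t + \<phi>)) = (\<lambda>t. - (c * w) * sin (w * t + \<phi>))"
proof
  fix t
  have "((\<lambda>t. c * cos (w * t + \<phi>)) has_real_derivative - (c * w) * sin (w * t + \<phi>)) (at t)"
    by (rule derivative_eq_intros refl | simp)+
  thus "deriv (\<lambda>t. c * cos (w * t + \<phi>)) t = - (c * w) * sin (w * t + \<phi>)"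
    by (rule DERIV_imp_deriv)
qed

lemma deriv_sin2: fixes c w \<phi> :: real shows "deriv (\<lambda>t. c * sin (w * t + \<phi>)) = (\<lambda>t. (c * w) * cos (w * t + \<phi>))"
proof
  fix t
  have "((\<lambda>t. c * sin (w * t + \<phi>)) has_real_derivative (c * w) * cos (w * t + \<phi>)) (at t)"
    by (rule derivative_eq_intros refl | simp)+
  thus "deriv (\<lambda>t. c * sin (w * t + \<phi>)) t = (c * w) * cos (w * t + \<phi>)"
    by (rule DERIV_imp_deriv)
qed

lemma deriv3_sin: "(deriv ^^ 3) (sinusoid A B w \<phi>) = (\<lambda>t. - (B * w ^ 3) * cos (w * t + \<phi>))"
proof -
  have "(deriv ^^ 3) (sinusoid A B w \<phi>) = deriv (deriv (deriv (sinusoid A B w \<phi>)))"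
    by (simp add: numeral_3_eq_3)
  also have "\<dots> = deriv (deriv (\<lambda>t. (B * w) * cos (w * t + \<phi>)))"
    by (simp add: deriv_sin)
  also have "\<dots> = deriv (\<lambda>t. (- (B * w * w)) * sin (w * t + \<phi>))"
    by (simp only: deriv_cos)
  also have "\<dots> = (\<lambda>t. - (B * w ^ 3) * cos (w * t + \<phi>))"
    by (simp only: deriv_sin2) (simp add: power3_eq_cube mult.assoc)
  finally show ?thesis .
qed

lemma car_cont:
  fixes g \<zeta> :: "real \<Rightarrow> real"
  assumes I: "\<And>t. t \<ge> 0 \<Longrightarrow> g integrable_on {0..t} \<and> integral {0..t} g = \<zeta> t - \<zeta> 0"
    and t: "t > 0"
  shows "isCont \<zeta> t \<and> (isCont g t \<longrightarrow> (\<zeta> has_real_derivative g t) (at t))"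
proof -
  define b where "b = t + 1"
  have b: "b \<ge> 0" using t b_def by simp
  have gi: "g integrable_on {0..b}" using I[OF b] by blast
  have eqon: "\<zeta> x = \<zeta> 0 + integral {0..x} g" if "x \<ge> 0" for x using I[OF that] by simp
  have ti: "t \<in> interior {0..b}" using t b_def by (simp add: interior_atLeastAtMost_real)
  have ev: "eventually (\<lambda>x. \<zeta> x = \<zeta> 0 + integral {0..x} g) (nhds t)"
  proof -
    have "eventually (\<lambda>x. x \<in> {0<..}) (nhds t)" by (rule eventually_nhds_in_open) (use t in simp_all)
    thus ?thesis
    proof eventually_elim
      case (elim x) thus ?case using eqon[of x] by simp
    qed
  qed
  have c0: "continuous_on {0..b} (\<lambda>x. integral {0..x} g)"
    by (rule indefinite_integral_continuous_1[OF gi])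
  have c1: "continuous_on {0..b} (\<lambda>x. \<zeta> 0 + integral {0..x} g)"
    by (rule continuous_on_add[OF continuous_on_const c0])
  have "isCont (\<lambda>x. \<zeta> 0 + integral {0..x} g) t"
    by (rule continuous_on_interior[OF c1 ti])
  hence C: "isCont \<zeta> t" using isCont_cong[OF ev] by simp
  have D: "(\<zeta> has_real_derivative g t) (at t)" if gc: "isCont g t"
  proof -
    have tin: "t \<in> {0..b} - {}" using t b_def by simp
    have gcw: "continuous (at t within ({0..b} - {})) g"
      by (rule continuous_at_imp_continuous_within[OF gc])
    have "((\<lambda>u. integral {0..u} g) has_vector_derivative g t) (at t within ({0..b} - {}))"
      by (rule integral_has_vector_derivative_continuous_at[OF gi tin finite.emptyI gcw])
    moreover have "at t within ({0..b} - {}) = at t" using at_within_interior[OF ti] by simp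
    ultimately have "((\<lambda>u. integral {0..u} g) has_real_derivative g t) (at t)"
      by (simp add: has_real_derivative_iff_has_vector_derivative)
    from DERIV_add[OF DERIV_const[of "\<zeta> 0"] this]
    have "((\<lambda>x. \<zeta> 0 + integral {0..x} g) has_real_derivative g t) (at t)" by simp
    thus ?thesis using DERIV_cong_ev[OF refl ev refl] by simp
  qed
  show ?thesis using C D by blast
qed

theorem theorem1:
  fixes A B w \<phi>0 Bmin wmin L :: real and m :: nat
    and \<alpha>1 \<beta>1 r \<epsilon> T1 :: real and p q :: nat
  assumes "A > 0" and "Bmin > 0" and "wmin > 0" and "B > Bmin"
    and "w = 0 \<or> w \<ge> wmin"
    and "L > 0" and "m \<ge> 4"
    and "\<forall>t. \<bar>(deriv ^^ m) (sinusoid A B w \<phi>0) t\<bar> \<le> L"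
    and "\<alpha>1 > 0" and "\<beta>1 > 0"
    and "odd p" and "odd q" and "0 < q" and "q < 2 * p"
    and "r > 0" and "\<epsilon> > 0"
    and PE: "\<forall>A' B' w' \<phi>'. A' > 0 \<longrightarrow> B' > Bmin \<longrightarrow> w' \<ge> wmin \<longrightarrow>
               (\<forall>t. \<epsilon> \<le> win_int r (deriv (sinusoid A' B' w' \<phi>')) t)"
  shows "\<exists>Tmax. \<forall>z2 z4 \<zeta>.
           diff_states (sinusoid A B w \<phi>0) r T1 z2 z4 \<and>
           car_solution (zeta_rhs \<alpha>1 \<beta>1 p q r \<epsilon> z2 z4) \<zeta> \<longrightarrow>
           (\<forall>t\<ge>Tmax. sqrt \<bar>\<zeta> t\<bar> = w)"
proof -
  note A0 = assms(1) and Bm = assms(2) and wm = assms(3) and BB = assms(4) and wcase = assms(5)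
  note ab = assms(9,10) and pq = assms(11-14) and r0 = assms(15) and eps = assms(16)
  have p0: "p > 0" using pq(1) by (cases p) auto
  define s where "s = real q / real p"
  have s0: "s > 0" using p0 pq(3) s_def by simp
  define Tf where "Tf = pi / 2 / (s * sqrt (\<alpha>1 * \<beta>1))"
  define T0 where "T0 = max T1 0 + r"
  define h where "h = (\<lambda>t. \<bar>B * w * cos (w * t + \<phi>0)\<bar>)"
  define G where "G = (\<lambda>t. integral {t - r..t} h)"
  have hc: "continuous_on UNIV h" unfolding h_def by (intro continuous_intros)
  have Gd: "(G has_real_derivative h x - h (x - r)) (at x)" for x
    unfolding G_def by (rule window_deriv[OF hc r0])
  have Gc: "isCont G x" for x using DERIV_isCont[OF Gd] .
  have Gpos: "G t > \<epsilon>" if wn: "w \<noteq> 0" for t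
  proof -
    have ww: "w \<ge> wmin" using wcase wn by blast
    define B' where "B' = (B + Bmin) / 2"
    have B'1: "B' > Bmin" "B' < B" using BB unfolding B'_def by simp_all
    have Bp: "B > 0" using BB Bm by simp
    define c where "c = B' / B"
    have c: "c > 0" "c < 1" using B'1 Bp Bm unfolding c_def by (simp_all add: field_simps)
    have "\<epsilon> \<le> win_int r (deriv (sinusoid A B' w \<phi>0)) t" by (rule PE[rule_format, OF A0 B'1(1) ww])
    also have "\<dots> = integral {t - r..t} (\<lambda>\<tau>. c * h \<tau>)"
      unfolding win_int_def deriv_sin
    proof (rule integral_cong)
      fix x
      have "\<bar>B' * w * cos (w * x + \<phi>0)\<bar> = \<bar>c * (B * w * cos (w * x + \<phi>0))\<bar>"
        unfolding c_def using Bp by (simp add: field_simps)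
      also have "\<dots> = c * h x" unfolding h_def using c by (simp add: abs_mult)
      finally show "\<bar>B' * w * cos (w * x + \<phi>0)\<bar> = c * h x" .
    qed
    also have "\<dots> = c * G t" unfolding G_def by simp
    finally have "\<epsilon> \<le> c * G t" .
    have Gt: "G t > 0"
    proof (rule ccontr)
      assume "\<not> G t > 0"
      hence "c * G t \<le> 0" using c by (simp add: mult_nonneg_nonpos)
      thus False using \<open>\<epsilon> \<le> c * G t\<close> eps by linarith
    qed
    have "c * G t < 1 * G t" by (rule mult_strict_right_mono[OF c(2) Gt])
    thus ?thesis using \<open>\<epsilon> \<le> c * G t\<close> by linarith
  qed
  define \<Phi> where "\<Phi> = (\<lambda>x. \<alpha>1 * opow p (int p + int q) x + \<beta>1 * opow p (int p - int q) x)"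
  have \<Phi>eq: "\<Phi> x = \<alpha>1 * \<bar>x\<bar> powr (1 + s) + \<beta>1 * \<bar>x\<bar> powr (1 - s)" if "x \<noteq> 0" for x
  proof -
    have e1: "even (int p + int q)" "even (int p - int q)" using pq(1,2) by auto
    have "real_of_int (int p + int q) / real p = 1 + s"
         "real_of_int (int p - int q) / real p = 1 - s"
      using p0 unfolding s_def by (simp_all add: field_simps)
    thus ?thesis unfolding \<Phi>_def using opow_eq[OF pq(1) e1(1) that] opow_eq[OF pq(1) e1(2) that] by simp
  qed
  have \<Phi>c: "isCont \<Phi> x" if "x \<noteq> 0" for x
    unfolding \<Phi>_def using opow_cont[OF pq(1) that] by (intro continuous_intros) auto
  have key: "sqrt \<bar>\<zeta> t\<bar> = w"
    if DS: "diff_states (sinusoid A B w \<phi>0) r T1 z2 z4"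
    and CS: "car_solution (zeta_rhs \<alpha>1 \<beta>1 p q r \<epsilon> z2 z4) \<zeta>"
    and t: "t \<ge> T0 + Tf" for z2 z4 \<zeta> t
  proof -
    have T0p: "T0 > 0" "T0 \<ge> T1 + r" unfolding T0_def using r0 by auto
    have zeq: "z2 \<tau> = deriv (sinusoid A B w \<phi>0) \<tau> \<and> z4 \<tau> = (deriv ^^ 3) (sinusoid A B w \<phi>0) \<tau>"
      if "\<tau> \<ge> T1" for \<tau>
      using DS that unfolding diff_states_def by blast
    have hz2: "\<bar>z2 \<tau>\<bar> = h \<tau>" if "\<tau> \<ge> T1" for \<tau>
      using zeq[OF that] unfolding deriv_sin h_def by simp
    have hz4: "\<bar>z4 \<tau>\<bar> = w^2 * h \<tau>" if "\<tau> \<ge> T1" for \<tau>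
    proof -
      have "z4 \<tau> = - (B * w ^ 3) * cos (w * \<tau> + \<phi>0)" using zeq[OF that] unfolding deriv3_sin by simp
      also have "\<dots> = - (w^2) * (B * w * cos (w * \<tau> + \<phi>0))" by (simp add: power2_eq_square power3_eq_cube)
      finally show ?thesis unfolding h_def by (simp add: abs_mult)
    qed
    have \<Gamma>1: "win_int r z2 x = G x" if "x \<ge> T1 + r" for x
      unfolding win_int_def G_def by (rule integral_cong) (use that hz2 in auto)
    have \<Gamma>2: "win_int r z4 x = w^2 * G x" if "x \<ge> T1 + r" for x
    proof -
      have "win_int r z4 x = integral {x - r..x} (\<lambda>\<tau>. w^2 * h \<tau>)"
        unfolding win_int_def by (rule integral_cong) (use that hz4 in auto)
      thus ?thesis unfolding G_def by simp
    qed
    define g where "g = (\<lambda>x. zeta_rhs \<alpha>1 \<beta>1 p q r \<epsilon> z2 z4 x (\<zeta> x))"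
    have I: "g integrable_on {0..x} \<and> integral {0..x} g = \<zeta> x - \<zeta> 0" if "x \<ge> 0" for x
    proof -
      have "(g has_integral (\<zeta> x - \<zeta> 0)) {0..x}"
        using CS that unfolding car_solution_def g_def by blast
      thus ?thesis using has_integral_integrable integral_unique by blast
    qed
    have ZC: "isCont \<zeta> x \<and> (isCont g x \<longrightarrow> (\<zeta> has_real_derivative g x) (at x))" if "x > 0" for x
      by (rule car_cont[OF I that]) 
    have evT0: "eventually (\<lambda>x. x > T0) (nhds x)" if "x > T0" for x
      by (rule eventually_nhds_in_open[of "{T0<..}", simplified]) (use that in simp_all)
    have hC: "isCont h x" for x using hc by (simp add: continuous_on_eq_continuous_at)
    show ?thesis
    proof (cases "w = 0")
      case True
      have G0: "G x = 0" for x unfolding G_def h_def using True by simp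
      have gf: "g x = - \<Phi> (\<zeta> x)" if "x > T0" for x
        using \<Gamma>1[of x] that T0p G0 eps unfolding g_def zeta_rhs_def Let_def \<Phi>_def by auto
      have ce: "continuous_on {T0..} \<zeta>"
        by (rule continuous_at_imp_continuous_on) (use ZC T0p in auto)
      have d: "(\<zeta> has_real_derivative -(\<alpha>1 * \<bar>\<zeta> x\<bar> powr (1+s) + \<beta>1 * \<bar>\<zeta> x\<bar> powr (1-s))) (at x)"
        if "x > T0" "\<zeta> x \<noteq> 0" for x
      proof -
        have zc: "isCont \<zeta> x" using ZC[of x] that T0p by simp
        have "isCont (\<lambda>y. - \<Phi> (\<zeta> y)) x"
          by (intro continuous_intros isCont_o2[OF zc \<Phi>c[OF that(2)]])
        moreover have "eventually (\<lambda>y. g y = - \<Phi> (\<zeta> y)) (nhds x)"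
          using evT0[OF that(1)] by eventually_elim (use gf in simp)
        ultimately have "isCont g x" using isCont_cong by metis
        hence "(\<zeta> has_real_derivative g x) (at x)" using ZC[of x] that T0p by simp
        thus ?thesis using gf[OF that(1)] \<Phi>eq[OF that(2)] by simp
      qed
      have "\<zeta> t = 0"
        by (rule ode_zero[OF ab s0 ce d]) (use t Tf_def in simp_all)
      thus ?thesis using True by simp
    next
      case False
      have wp: "w > 0" using wcase False wm by auto
      have Gp: "G x > 0" for x using Gpos[OF False, of x] eps by simp
      define e where "e = (\<lambda>x. (\<zeta> x - w^2) * G x)"
      have gf: "g x = - inverse (G x) * (\<Phi> (\<zeta> x * G x - w^2 * G x) + \<zeta> x * (h x - h (x - r))
                     - (w^2 * h x - w^2 * h (x - r)))" if "x > T0" for x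
      proof -
        have "win_int r z2 x = G x" "win_int r z4 x = w^2 * G x"
          using \<Gamma>1[of x] \<Gamma>2[of x] that T0p by simp_all
        moreover have "\<bar>z2 x\<bar> = h x" "\<bar>z2 (x - r)\<bar> = h (x - r)" "\<bar>z4 x\<bar> = w^2 * h x"
            "\<bar>z4 (x - r)\<bar> = w^2 * h (x - r)"
          using hz2[of x] hz2[of "x - r"] hz4[of x] hz4[of "x - r"] that T0p r0 by simp_all
        moreover have "G x > \<epsilon>" using Gpos[OF False] .
        ultimately show ?thesis unfolding g_def zeta_rhs_def Let_def \<Phi>_def by simp
      qed
      have ce: "continuous_on {T0..} e"
      proof (rule continuous_at_imp_continuous_on, rule ballI)
        fix x assume "x \<in> {T0..}"
        hence zc: "isCont \<zeta> x" using ZC[of x] T0p by simp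
        show "isCont e x" unfolding e_def
          by (rule continuous_mult[OF continuous_diff[OF zc continuous_const] Gc])
      qed
      have d: "(e has_real_derivative -(\<alpha>1 * \<bar>e x\<bar> powr (1+s) + \<beta>1 * \<bar>e x\<bar> powr (1-s))) (at x)"
        if "x > T0" "e x \<noteq> 0" for x
      proof -
        have zc: "isCont \<zeta> x" using ZC[of x] that T0p by simp
        have ex: "\<zeta> x * G x - w^2 * G x = e x" unfolding e_def by (simp add: algebra_simps)
        have ec: "isCont (\<lambda>y. \<zeta> y * G y - w^2 * G y) x"
          by (rule continuous_diff[OF continuous_mult[OF zc Gc] continuous_mult[OF continuous_const Gc]])
        have \<Phi>c': "isCont \<Phi> (\<zeta> x * G x - w^2 * G x)" using \<Phi>c[OF that(2)] ex by simp
        have PC: "isCont (\<lambda>y. \<Phi> (\<zeta> y * G y - w^2 * G y)) x" by (rule isCont_o2[OF ec \<Phi>c'])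
        have hcr: "isCont (\<lambda>y. h (y - r)) x"
          by (rule isCont_o2[OF continuous_diff[OF continuous_ident continuous_const] hC])
        have hd: "isCont (\<lambda>y. h y - h (y - r)) x" by (rule continuous_diff[OF hC hcr])
        have hd2: "isCont (\<lambda>y. w^2 * h y - w^2 * h (y - r)) x"
          by (rule continuous_diff[OF continuous_mult[OF continuous_const hC] continuous_mult[OF continuous_const hcr]])
        have ig: "isCont (\<lambda>y. - inverse (G y)) x"
          by (rule continuous_minus[OF continuous_inverse[OF Gc]]) (use Gp[of x] in simp)
        have FC: "isCont (\<lambda>y. - inverse (G y) * (\<Phi> (\<zeta> y * G y - w^2 * G y) + \<zeta> y * (h y - h (y - r))
                     - (w^2 * h y - w^2 * h (y - r)))) x"
          by (rule continuous_mult[OF ig continuous_diff[OF continuous_add[OF PC continuous_mult[OF zc hd]] hd2]])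
        have ev: "eventually (\<lambda>y. g y = - inverse (G y) * (\<Phi> (\<zeta> y * G y - w^2 * G y) + \<zeta> y * (h y - h (y - r))
                     - (w^2 * h y - w^2 * h (y - r)))) (nhds x)"
          using evT0[OF that(1)] by eventually_elim (rule gf)
        have "isCont g x" by (rule iffD2[OF isCont_cong[OF ev] FC])
        hence zd: "(\<zeta> has_real_derivative g x) (at x)" using ZC[of x] that T0p by simp
        have D1: "(e has_real_derivative (g x - 0) * G x + (h x - h (x - r)) * (\<zeta> x - w^2)) (at x)"
          unfolding e_def by (rule DERIV_mult[OF DERIV_diff[OF zd DERIV_const] Gd])
        have alg: "(- inverse Gx * Q) * Gx = - Q" if "Gx \<noteq> 0" for Gx Q :: real
          using that by (simp add: field_simps)
        have gG: "g x * G x = - (\<Phi> (e x) + \<zeta> x * (h x - h (x - r)) - (w^2 * h x - w^2 * h (x - r)))"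
        proof -
          have "g x * G x = (- inverse (G x) * (\<Phi> (e x) + \<zeta> x * (h x - h (x - r)) - (w^2 * h x - w^2 * h (x - r)))) * G x"
            unfolding gf[OF that(1)] ex ..
          also have "\<dots> = - (\<Phi> (e x) + \<zeta> x * (h x - h (x - r)) - (w^2 * h x - w^2 * h (x - r)))"
            by (rule alg) (use Gp[of x] in simp)
          finally show ?thesis .
        qed
        have "(g x - 0) * G x + (h x - h (x - r)) * (\<zeta> x - w^2) = - \<Phi> (e x)"
          using gG by (simp add: algebra_simps)
        thus ?thesis using D1 \<Phi>eq[OF that(2)] by simp
      qed
      have "e t = 0"
        by (rule ode_zero[OF ab s0 ce d]) (use t Tf_def in simp_all)
      hence "\<zeta> t = w^2" using Gp[of t] unfolding e_def by simp
      thus ?thesis using wp by simp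
    qed
  qed
  show ?thesis by (rule exI[of _ "T0 + Tf"]) (use key in blast)
qed

end
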